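(* Let $G$ be a connected abelian Lie group with Lie algebra $\mathfrak{g}$, a real vector space of dimension $n$, and exponential map $\exp:\mathfrak{g}\to G$ (the universal covering homomorphism). Let $T$ be the maximal torus of $G$, $\mathfrak{t}=\exp^{-1}(T)$ its Lie algebra, and $\Gamma=\ker\exp$, a lattice in $\mathfrak{t}$; let $v_1,\ldots,v_t$ be a basis of $\Gamma$. Let $v_{t+1},\ldots,v_{n+1}$ be elements of $\mathfrak{g}$. Then the subsemigroup of $G$ generated by $\exp(v_{t+1}),\ldots,\exp(v_{n+1})$ is dense in $G$ if and only if the following two conditions hold: (a) the vectors $v_1,\ldots,v_n$ form a basis of $\mathfrak{g}$ over $\mathbb{R}$; (b) writing $v_{n+1}=\alpha_1v_1+\cdots+\alpha_nv_n$, we have $\alpha_i<0$ for $i=t+1,\ldots,n$, and $1,\alpha_1,\ldots,\alpha_n$ are linearly independent over $\mathbb{Q}$.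
   Context: The maximal torus of a connected abelian Lie group is its unique maximal compact subgroup (a compact connected abelian Lie group). *)

theory Defs
  imports "HOL-Analysis.Analysis"
begin

inductive_set subsemigroup_gen :: "'g::plus set \<Rightarrow> 'g set" for S where
  gen: "x \<in> S \<Longrightarrow> x \<in> subsemigroup_gen S"
| add: "x \<in> subsemigroup_gen S \<Longrightarrow> y \<in> subsemigroup_gen S \<Longrightarrow> x + y \<in> subsemigroup_gen S"

end

theory Submission
  imports Defs "HOL-Analysis.Kronecker_Approximation_Theorem"
begin


lemma dense_iff_open:
  fixes T :: "'a::topological_space set"
  shows "closure T = UNIV \<longleftrightarrow> (\<forall>S. open S \<and> S \<noteq> {} \<longrightarrow> S \<inter> T \<noteq> {})"
proof
  assume "closure T = UNIV" then show "\<forall>S. open S \<and> S \<noteq> {} \<longrightarrow> S \<inter> T \<noteq> {}"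
    using open_Int_closure_eq_empty by (metis inf_top.right_neutral)
next
  assume H: "\<forall>S. open S \<and> S \<noteq> {} \<longrightarrow> S \<inter> T \<noteq> {}"
  show "closure T = UNIV"
  proof (rule ccontr)
    assume "closure T \<noteq> UNIV"
    then have "open (- closure T)" "- closure T \<noteq> {}" by auto
    then have "(- closure T) \<inter> T \<noteq> {}" using H by blast
    then show False using closure_subset by blast
  qed
qed

lemma covering_space_open_map_gen:
  fixes S :: "'a :: topological_space set" and T :: "'b :: topological_space set"
  assumes p: "covering_space c p S" and T: "openin (top_of_set c) T"
    shows "openin (top_of_set S) (p ` T)"
proof -
  have pce: "p ` c = S"
   and covs:
       "\<And>x. x \<in> S \<Longrightarrow>
            \<exists>X VS. x \<in> X \<and> openin (top_of_set S) X \<and>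
                  \<Union>VS = c \<inter> p -` X \<and>
                  (\<forall>u \<in> VS. openin (top_of_set c) u) \<and>
                  pairwise disjnt VS \<and>
                  (\<forall>u \<in> VS. \<exists>q. homeomorphism u X p q)"
    using p by (auto simp: covering_space_def)
  have "T \<subseteq> c" using openin_imp_subset[OF T] .
  have "\<exists>X. openin (top_of_set S) X \<and> y \<in> X \<and> X \<subseteq> p ` T"
          if "y \<in> p ` T" for y
  proof -
    have "y \<in> S" using \<open>T \<subseteq> c\<close> pce that by blast
    obtain U VS where "y \<in> U" and U: "openin (top_of_set S) U"
                  and VS: "\<Union>VS = c \<inter> p -` U"
                  and openVS: "\<forall>V \<in> VS. openin (top_of_set c) V"
                  and homVS: "\<And>V. V \<in> VS \<Longrightarrow> \<exists>q. homeomorphism V U p q"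
      using covs [OF \<open>y \<in> S\<close>] by auto
    obtain x where "x \<in> c" "p x \<in> U" "x \<in> T" "p x = y"
      using \<open>T \<subseteq> c\<close> \<open>y \<in> U\<close> \<open>y \<in> p ` T\<close> by blast
    with VS obtain V where "x \<in> V" "V \<in> VS" by auto
    then obtain q where q: "homeomorphism V U p q" using homVS by blast
    then have ptV: "p ` (T \<inter> V) = U \<inter> q -` (T \<inter> V)"
      using VS \<open>V \<in> VS\<close> by (auto simp: homeomorphism_def)
    have ocv: "openin (top_of_set c) V"
      by (simp add: \<open>V \<in> VS\<close> openVS)
    have "openin (top_of_set (q ` U)) (T \<inter> V)"
      using q unfolding homeomorphism_def
      by (metis T inf.absorb_iff2 ocv openin_imp_subset openin_subtopology_Int subtopology_subtopology)
    then have "openin (top_of_set U) (U \<inter> q -` (T \<inter> V))"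
      using continuous_on_open homeomorphism_def q by blast
    then have os: "openin (top_of_set S) (U \<inter> q -` (T \<inter> V))"
      using openin_trans [of U] by (simp add: Collect_conj_eq U)
    show ?thesis
    proof (intro exI conjI)
      show "openin (top_of_set S) (p ` (T \<inter> V))"
        by (simp only: ptV os)
    qed (use \<open>p x = y\<close> \<open>x \<in> V\<close> \<open>x \<in> T\<close> in auto)
  qed
  with openin_subopen show ?thesis by blast
qed

lemma dense_image_iff:
  fixes p :: "'a::topological_space \<Rightarrow> 'b::topological_space"
  assumes cov: "covering_space UNIV p UNIV"
  shows "closure (p ` A) = UNIV \<longleftrightarrow> closure (p -` (p ` A)) = UNIV"
proof
  assume H: "closure (p ` A) = UNIV"
  have H': "\<And>S. open S \<Longrightarrow> S \<noteq> {} \<Longrightarrow> S \<inter> p ` A \<noteq> {}"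
    using H unfolding dense_iff_open by blast
  show "closure (p -` (p ` A)) = UNIV"
    unfolding dense_iff_open
  proof (intro allI impI)
    fix U :: "'a set" assume U: "open U \<and> U \<noteq> {}"
    have "openin (top_of_set UNIV) (p ` U)"
      using covering_space_open_map_gen[OF cov, of U] U by simp
    then have "open (p ` U)" by simp
    moreover have "p ` U \<noteq> {}" using U by auto
    ultimately have "p ` U \<inter> p ` A \<noteq> {}" using H' by blast
    then show "U \<inter> p -` (p ` A) \<noteq> {}" by blast
  qed
next
  assume H: "closure (p -` (p ` A)) = UNIV"
  have H': "\<And>S. open S \<Longrightarrow> S \<noteq> {} \<Longrightarrow> S \<inter> p -` (p ` A) \<noteq> {}"
    using H unfolding dense_iff_open by blast
  have cont: "continuous_on UNIV p" using covering_space_imp_continuous[OF cov] .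
  have surj: "surj p" using covering_space_imp_surjective[OF cov] .
  show "closure (p ` A) = UNIV"
    unfolding dense_iff_open
  proof (intro allI impI)
    fix U :: "'b set" assume U: "open U \<and> U \<noteq> {}"
    have "open (p -` U)" using cont U open_vimage by blast
    moreover have "p -` U \<noteq> {}"
    proof -
      obtain y where "y \<in> U" using U by blast
      moreover obtain x where "p x = y" using surj by (metis surjD)
      ultimately show ?thesis by blast
    qed
    ultimately have "p -` U \<inter> p -` (p ` A) \<noteq> {}" using H' by blast
    then show "U \<inter> p ` A \<noteq> {}" by blast
  qed
qed

lemma subsemigroup_gen_image:
  assumes hom: "\<And>x y. f (x + y) = f x + f y"
  shows "subsemigroup_gen (f ` V) = f ` subsemigroup_gen V"
proof
  show "subsemigroup_gen (f ` V) \<subseteq> f ` subsemigroup_gen V"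
  proof
    fix x assume "x \<in> subsemigroup_gen (f ` V)"
    then show "x \<in> f ` subsemigroup_gen V"
    proof induct
      case (gen x) then show ?case by (auto intro: subsemigroup_gen.gen)
    next
      case (add x y)
      then obtain a b where "a \<in> subsemigroup_gen V" "b \<in> subsemigroup_gen V" "x = f a" "y = f b" by auto
      then show ?case using hom[of a b] by (metis image_eqI subsemigroup_gen.add)
    qed
  qed
next
  show "f ` subsemigroup_gen V \<subseteq> subsemigroup_gen (f ` V)"
  proof
    fix y assume "y \<in> f ` subsemigroup_gen V"
    then obtain x where x: "x \<in> subsemigroup_gen V" "y = f x" by auto
    from x(1) have "f x \<in> subsemigroup_gen (f ` V)"
    proof induct
      case (gen x) then show ?case by (auto intro: subsemigroup_gen.gen)
    next
      case (add x y) then show ?case using hom[of x y] by (metis subsemigroup_gen.add)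
    qed
    then show "y \<in> subsemigroup_gen (f ` V)" using x by simp
  qed
qed

lemma subsemigroup_gen_subset:
  assumes "V \<subseteq> P" "\<And>x y. x \<in> P \<Longrightarrow> y \<in> P \<Longrightarrow> x + y \<in> P"
  shows "subsemigroup_gen V \<subseteq> P"
proof
  fix x assume "x \<in> subsemigroup_gen V" then show "x \<in> P"
    by induct (use assms in auto)
qed



lemma kron_index_indep:
  fixes \<alpha> :: "nat \<Rightarrow> real" and n :: nat
  assumes indep: "\<forall>q::nat\<Rightarrow>rat. of_rat (q 0) + (\<Sum>i=1..n. of_rat (q i) * \<alpha> i) = 0 \<longrightarrow> (\<forall>i\<in>{0..n}. q i = 0)"
  defines "\<theta> \<equiv> \<lambda>i. if i < n then \<alpha> (Suc i) else 1"
  assumes u: "(\<Sum>i\<le>n. of_int (u i) * \<theta> i) = 0"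
  shows "\<forall>i\<le>n. u i = 0"
proof -
  define q :: "nat \<Rightarrow> rat" where "q i = (if i = 0 then of_int (u n) else of_int (u (i - 1)))" for i
  have "(\<Sum>i\<le>n. of_int (u i) * \<theta> i) = (\<Sum>i<n. of_int (u i) * \<theta> i) + of_int (u n) * \<theta> n"
    by (simp add: lessThan_Suc_atMost[symmetric])
  also have "\<dots> = (\<Sum>i<n. of_int (u i) * \<alpha> (Suc i)) + of_int (u n)"
    by (simp add: \<theta>_def)
  finally have e1: "(\<Sum>i<n. of_int (u i) * \<alpha> (Suc i)) + of_int (u n) = 0" using u by simp
  have "(\<Sum>i=1..n. of_rat (q i) * \<alpha> i) = (\<Sum>i<n. of_rat (q (Suc i)) * \<alpha> (Suc i))"
    by (simp add: sum.atLeast1_atMost_eq)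
  also have "\<dots> = (\<Sum>i<n. of_int (u i) * \<alpha> (Suc i))"
    by (simp add: q_def)
  finally have "of_rat (q 0) + (\<Sum>i=1..n. of_rat (q i) * \<alpha> i) = 0"
    using e1 by (simp add: q_def)
  then have "\<forall>i\<in>{0..n}. q i = 0" using indep by blast
  then show ?thesis
    apply (auto simp: q_def)
    by (metis Suc_le_mono atLeastAtMost_iff diff_Suc_1 le0 le_imp_less_Suc less_Suc_eq_le nat.distinct(1) of_int_eq_0_iff order_le_less)
qed

lemma kron_nat:
  fixes \<alpha> c :: "nat \<Rightarrow> real" and n N0 :: nat and \<epsilon> :: real
  assumes indep: "\<forall>q::nat\<Rightarrow>rat. of_rat (q 0) + (\<Sum>i=1..n. of_rat (q i) * \<alpha> i) = 0 \<longrightarrow> (\<forall>i\<in>{0..n}. q i = 0)"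
    and eps: "\<epsilon> > 0"
  shows "\<exists>b::nat. b \<ge> N0 \<and> (\<exists>m::nat\<Rightarrow>int. \<forall>i\<in>{1..n}. \<bar>real b * \<alpha> i - of_int (m i) - c i\<bar> < \<epsilon>)"
proof -
  define \<theta> where "\<theta> \<equiv> \<lambda>i. if i < n then \<alpha> (Suc i) else 1"
  have II: "\<And>u. (\<Sum>i\<le>n. of_int (u i) * \<theta> i) = 0 \<Longrightarrow> \<forall>i\<le>n. u i = 0"
    using kron_index_indep[OF indep] unfolding \<theta>_def by blast
  have inj: "inj_on \<theta> {..n}"
  proof (rule inj_onI, rule ccontr)
    fix i j assume ij: "i \<in> {..n}" "j \<in> {..n}" "\<theta> i = \<theta> j" "i \<noteq> j"
    define u :: "nat \<Rightarrow> int" where "u k = of_bool (k = i) - of_bool (k = j)" for k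
    have "(\<Sum>k\<le>n. of_int (u k) * \<theta> k) = (\<Sum>k\<le>n. (if k = i then \<theta> k else 0)) - (\<Sum>k\<le>n. (if k = j then \<theta> k else 0))"
    proof -
      have "\<And>k. of_int (u k) * \<theta> k = (if k = i then \<theta> k else 0) - (if k = j then \<theta> k else 0)"
        unfolding u_def by (auto simp: algebra_simps)
      then show ?thesis by (simp add: sum_subtractf)
    qed
    also have "\<dots> = 0" using ij by (simp add: sum.delta)
    finally have "\<forall>k\<le>n. u k = 0" using II by blast
    then have "u i = 0" using ij by auto
    then show False using ij by (simp add: u_def)
  qed
  interpret M: Modules.module "(\<lambda>r. (*) (real_of_int r))"
    by (simp add: Modules.module.intro distrib_left mult.commute)
  have ind: "M.independent (\<theta> ` {..n})"
  proof
    assume "M.dependent (\<theta> ` {..n})"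
    then obtain u where u: "\<exists>v\<in>\<theta>`{..n}. u v \<noteq> 0" "(\<Sum>v\<in>\<theta>`{..n}. of_int (u v) * v) = 0"
      using M.dependent_finite by auto
    have "(\<Sum>i\<le>n. of_int (u (\<theta> i)) * \<theta> i) = 0"
      using u(2) by (simp add: sum.reindex[OF inj])
    then have "\<forall>i\<le>n. u (\<theta> i) = 0" using II[of "\<lambda>i. u (\<theta> i)"] by blast
    then show False using u(1) by auto
  qed
  have \<theta>n: "\<theta> n = 1" by (simp add: \<theta>_def)
  have e2: "\<epsilon>/2 > 0" using eps by simp
  obtain k0 m0 where k0: "\<And>i. i < n \<Longrightarrow> \<bar>of_int k0 * \<theta> i - of_int (m0 i) - c (Suc i)\<bar> < \<epsilon>/2"
    using Kronecker_thm_2[of \<theta> n "\<epsilon>/2" "\<lambda>i. c (Suc i)"] ind inj \<theta>n e2 by blast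
  define j :: nat where "j = nat \<bar>k0\<bar> + N0"
  obtain N :: nat where N: "real j * 2 / \<epsilon> < N"
    using reals_Archimedean2 by blast
  have Npos: "N > 0" using N eps
    by (metis divide_nonneg_pos gr0I linorder_not_less of_nat_0 of_nat_0_le_iff zero_le_mult_iff zero_le_numeral)
  have jN: "real j * (1 / N) \<le> \<epsilon>/2"
    using N Npos eps by (simp add: field_simps)
  obtain q p where q: "0 < q" and qp: "\<And>i. i<n \<Longrightarrow> \<bar>of_int q * \<theta> i - of_int(p i)\<bar> < 1/N"
    using Dirichlet_approx_simult[OF Npos, where \<theta>=\<theta> and n=n] by blast
  define bi where "bi = k0 + int j * q"
  have bi_ge: "bi \<ge> int N0"
  proof -
    have "int j * q \<ge> int j" using q by (simp add: mult_le_cancel_left1)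
    then show ?thesis unfolding bi_def j_def by linarith
  qed
  define b where "b = nat bi"
  have rb: "real b = of_int k0 + real j * of_int q"
    using bi_ge unfolding b_def bi_def by simp
  define m where "m i = m0 (i - 1) + int j * p (i - 1)" for i
  show ?thesis
  proof (intro exI conjI ballI)
    show "N0 \<le> b" using bi_ge unfolding b_def by linarith
    fix i assume i: "i \<in> {1..n}"
    define i' where "i' = i - 1"
    have i': "i' < n" "i = Suc i'" using i unfolding i'_def by auto
    have th: "\<theta> i' = \<alpha> i" using i' by (simp add: \<theta>_def)
    have "real b * \<alpha> i - of_int (m i) - c i
       = (of_int k0 * \<theta> i' - of_int (m0 i') - c (Suc i')) + real j * (of_int q * \<theta> i' - of_int (p i'))"
      using i' th rb by (simp add: m_def algebra_simps)
    also have "\<bar>\<dots>\<bar> \<le> \<bar>of_int k0 * \<theta> i' - of_int (m0 i') - c (Suc i')\<bar> + real j * \<bar>of_int q * \<theta> i' - of_int (p i')\<bar>"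
      by (simp add: abs_mult abs_triangle_ineq[THEN order_trans])
    also have "\<dots> < \<epsilon>/2 + real j * (1/N)"
    proof -
      have "real j * \<bar>of_int q * \<theta> i' - of_int (p i')\<bar> \<le> real j * (1/N)"
        using qp[OF i'(1)] by (intro mult_left_mono) auto
      then show ?thesis using k0[OF i'(1)] by linarith
    qed
    also have "\<dots> \<le> \<epsilon>" using jN by linarith
    finally show "\<bar>real b * \<alpha> i - of_int (m i) - c i\<bar> < \<epsilon>" .
  qed
qed



lemma not_dense_linear:
  fixes g :: "'a::euclidean_space \<Rightarrow> real"
  assumes lin: "linear g" and x0: "g x0 \<noteq> 0" and C: "closed C" and r: "r \<notin> C"
    and D: "\<forall>x\<in>D. g x \<in> C"
  shows "closure D \<noteq> UNIV"
proof
  assume H: "closure D = UNIV"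
  have cont: "continuous_on UNIV g"
    using lin linear_conv_bounded_linear linear_continuous_on by blast
  have "closed (g -` C)" using closed_vimage[OF C cont] .
  moreover have "D \<subseteq> g -` C" using D by auto
  ultimately have "closure D \<subseteq> g -` C" by (rule closure_minimal[rotated])
  then have "g ((r / g x0) *\<^sub>R x0) \<in> C" using H by auto
  moreover have "g ((r / g x0) *\<^sub>R x0) = r" using x0 linear_scale[OF lin] by simp
  ultimately show False using r by simp
qed

lemma coord_functional:
  fixes v :: "nat \<Rightarrow> 'a::euclidean_space"
  assumes inj: "inj_on v I" and ind: "independent (v ` I)"
  shows "\<exists>g::'a\<Rightarrow>real. linear g \<and> (\<forall>i\<in>I. g (v i) = c i)"
proof -
  obtain g :: "'a \<Rightarrow> real" where g: "linear g" "\<forall>x\<in>v`I. g x = c (inv_into I v x)"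
    using linear_independent_extend[OF ind, of "\<lambda>x. c (inv_into I v x)"] by blast
  have "\<forall>i\<in>I. g (v i) = c i"
  proof
    fix i assume i: "i \<in> I"
    then have "g (v i) = c (inv_into I v (v i))" using g(2) by blast
    then show "g (v i) = c i" using inv_into_f_f[OF inj i] by simp
  qed
  then show ?thesis using g(1) by blast
qed

lemma span_coeffs:
  fixes v :: "nat \<Rightarrow> 'a::euclidean_space"
  assumes inj: "inj_on v I" and fin: "finite I" and x: "x \<in> span (v ` I)"
  shows "\<exists>c. x = (\<Sum>i\<in>I. c i *\<^sub>R v i)"
proof -
  obtain u where "x = (\<Sum>w\<in>v`I. u w *\<^sub>R w)"
    using x span_finite[of "v ` I"] fin by auto
  then have "x = (\<Sum>i\<in>I. u (v i) *\<^sub>R v i)" by (simp add: sum.reindex[OF inj])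
  then show ?thesis by (intro exI[of _ "\<lambda>i. u (v i)"])
qed

lemma functional_vanish_exists:
  fixes B :: "'a::euclidean_space set"
  assumes "span B \<noteq> UNIV"
  shows "\<exists>g::'a\<Rightarrow>real. \<exists>y. linear g \<and> g y = 1 \<and> (\<forall>x\<in>B. g x = 0)"
proof -
  obtain y where y: "y \<notin> span B" using assms by auto
  obtain B' where B': "B' \<subseteq> B" "independent B'" "B \<subseteq> span B'"
    by (rule maximal_independent_subset)
  have "span B' \<subseteq> span B" using B'(1) by (rule span_mono)
  then have yB': "y \<notin> span B'" using y by blast
  then have "y \<notin> B'" using span_base by blast
  have ind: "independent (insert y B')" using independent_insertI[OF yB' B'(2)] .
  obtain g :: "'a \<Rightarrow> real" where g: "linear g" "\<forall>x\<in>insert y B'. g x = (if x = y then 1 else 0)"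
    using linear_independent_extend[OF ind, of "\<lambda>x. if x = y then 1 else 0"] by blast
  have "\<forall>x\<in>B. g x = 0"
  proof
    fix x assume "x \<in> B"
    then have "x \<in> span B'" using B'(3) by blast
    then show "g x = 0"
    proof -
      have "\<And>b. b \<in> B' \<Longrightarrow> g b = 0" using g(2) \<open>y \<notin> B'\<close> by fastforce
      then show ?thesis using linear_eq_on[OF g(1) linear_zero \<open>x \<in> span B'\<close>] by blast
    qed
  qed
  moreover have "g y = 1" using g(2) by simp
  ultimately show ?thesis using g(1) by blast
qed

lemma half_not_Int: "(1/2::real) \<notin> \<int>"
proof
  assume "(1/2::real) \<in> \<int>"
  then obtain k :: int where "1/2 = (of_int k :: real)" by (auto elim: Ints_cases)
  then have "(1::real) = of_int (2 * k)" by simp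
  then have "1 = 2 * k" by linarith
  then show False by presburger
qed

lemma rat_common_denom:
  fixes q :: "nat \<Rightarrow> rat"
  shows "\<exists>d::int. d > 0 \<and> (\<forall>i\<le>n. of_int d * (of_rat (q i) :: real) \<in> \<int>)"
proof (induction n)
  case 0
  obtain a b where ab: "quotient_of (q 0) = (a, b)" by fastforce
  have "b > 0" using quotient_of_denom_pos[OF ab] .
  have "q 0 = of_int a / of_int b" using quotient_of_div[OF ab] .
  then have "of_int b * (of_rat (q 0) :: real) = of_int a" using \<open>b > 0\<close> by (simp add: of_rat_divide)
  then show ?case using \<open>b > 0\<close> by (intro exI[of _ b]) auto
next
  case (Suc n)
  then obtain d :: int where d: "d > 0" "\<forall>i\<le>n. of_int d * (of_rat (q i) :: real) \<in> \<int>" by blast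
  obtain a b where ab: "quotient_of (q (Suc n)) = (a, b)" by fastforce
  have "b > 0" using quotient_of_denom_pos[OF ab] .
  have "q (Suc n) = of_int a / of_int b" using quotient_of_div[OF ab] .
  then have e: "of_int b * (of_rat (q (Suc n)) :: real) = of_int a" using \<open>b > 0\<close> by (simp add: of_rat_divide)
  have "\<forall>i\<le>Suc n. of_int (d * b) * (of_rat (q i) :: real) \<in> \<int>"
  proof (intro allI impI)
    fix i assume "i \<le> Suc n"
    then consider "i \<le> n" | "i = Suc n" by linarith
    then show "of_int (d * b) * (of_rat (q i) :: real) \<in> \<int>"
    proof cases
      case 1
      then have "of_int d * (of_rat (q i) :: real) \<in> \<int>" using d by blast
      then have "of_int b * (of_int d * (of_rat (q i) :: real)) \<in> \<int>" by (rule Ints_mult[OF Ints_of_int])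
      moreover have "of_int (d * b) * (of_rat (q i) :: real) = of_int b * (of_int d * (of_rat (q i) :: real))"
        by (simp add: algebra_simps)
      ultimately show ?thesis by metis
    next
      case 2
      have "of_int (d * b) * (of_rat (q i) :: real) = of_int d * (of_int b * of_rat (q (Suc n)))"
        using 2 by simp
      also have "\<dots> = of_int d * of_int a" using e by simp
      finally show ?thesis by (metis Ints_of_int of_int_mult)
    qed
  qed
  then show ?case using d \<open>b > 0\<close> by (intro exI[of _ "d * b"]) auto
qed

lemma semigroup_mult:
  fixes z w :: "'a::real_vector"
  assumes "z \<in> subsemigroup_gen V" "w \<in> subsemigroup_gen V"
  shows "z + of_nat a *\<^sub>R w \<in> subsemigroup_gen V"
proof (induction a)
  case 0 then show ?case using assms by simp
next
  case (Suc a)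
  have "z + of_nat (Suc a) *\<^sub>R w = (z + of_nat a *\<^sub>R w) + w" by (simp add: algebra_simps)
  then show ?case using Suc assms(2) by (metis subsemigroup_gen.add)
qed

lemma semigroup_sum:
  fixes w :: "nat \<Rightarrow> 'a::real_vector"
  assumes "finite F" "y \<in> subsemigroup_gen V" "\<forall>i\<in>F. w i \<in> subsemigroup_gen V"
  shows "y + (\<Sum>i\<in>F. of_nat (a i) *\<^sub>R w i) \<in> subsemigroup_gen V"
  using assms
proof (induction F rule: finite_induct)
  case empty then show ?case by simp
next
  case (insert i F)
  have "y + (\<Sum>i\<in>insert i F. of_nat (a i) *\<^sub>R w i) = (y + (\<Sum>i\<in>F. of_nat (a i) *\<^sub>R w i)) + of_nat (a i) *\<^sub>R w i"
    using insert by (simp add: algebra_simps)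
  moreover have "(y + (\<Sum>i\<in>F. of_nat (a i) *\<^sub>R w i)) + of_nat (a i) *\<^sub>R w i \<in> subsemigroup_gen V"
    using insert semigroup_mult by auto
  ultimately show ?case by (simp add: add.assoc)
qed



theorem corollary4p7:
  fixes expG :: "'a::euclidean_space \<Rightarrow> 'g::{topological_ab_group_add, t2_space}"
    and v :: "nat \<Rightarrow> 'a" and t n :: nat
  assumes n_def: "n = DIM('a)"
    and conn: "connected (UNIV :: 'g set)"
    and hom: "\<And>x y. expG (x + y) = expG x + expG y"
    and cover: "covering_space UNIV expG UNIV"
    and t_le: "t \<le> n"
    and Gamma_span: "{x. expG x = 0} = {(\<Sum>i=1..t. of_int (k i) *\<^sub>R v i) | k :: nat \<Rightarrow> int. True}"
    and Gamma_indep: "\<And>k :: nat \<Rightarrow> int. (\<Sum>i=1..t. of_int (k i) *\<^sub>R v i) = 0 \<Longrightarrow> \<forall>i\<in>{1..t}. k i = 0"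
  shows "closure (subsemigroup_gen (expG ` v ` {t+1..n+1})) = UNIV \<longleftrightarrow>
           ((inj_on v {1..n} \<and> independent (v ` {1..n}) \<and> span (v ` {1..n}) = UNIV) \<and>
            (\<exists>\<alpha> :: nat \<Rightarrow> real.
               v (n+1) = (\<Sum>i=1..n. \<alpha> i *\<^sub>R v i) \<and>
               (\<forall>i\<in>{t+1..n}. \<alpha> i < 0) \<and>
               (\<forall>q :: nat \<Rightarrow> rat. of_rat (q 0) + (\<Sum>i=1..n. of_rat (q i) * \<alpha> i) = 0
                   \<longrightarrow> (\<forall>i\<in>{0..n}. q i = 0))))"
proof -
  define V where "V = v ` {t+1..n+1}"
  define S where "S = subsemigroup_gen V"
  define \<Gamma> where "\<Gamma> = {(\<Sum>i=1..t. of_int (k i) *\<^sub>R v i) | k :: nat \<Rightarrow> int. True}"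
  define D where "D = {s + \<gamma> | s \<gamma>. s \<in> S \<and> \<gamma> \<in> \<Gamma>}"
  have red: "closure (subsemigroup_gen (expG ` v ` {t+1..n+1})) = UNIV \<longleftrightarrow> closure D = UNIV"
  proof -
    have "subsemigroup_gen (expG ` v ` {t+1..n+1}) = expG ` S"
      unfolding S_def V_def using subsemigroup_gen_image[of expG, OF hom] by blast
    moreover have "expG -` (expG ` S) = D"
    proof (intro equalityI subsetI)
      fix x assume "x \<in> expG -` expG ` S"
      then obtain s where s: "s \<in> S" "expG x = expG s" by auto
      have "expG x = expG (x - s) + expG s" using hom[of "x - s" s] by simp
      then have "x - s \<in> {x. expG x = 0}" using s(2) by simp
      then have xs: "x - s \<in> \<Gamma>" unfolding \<Gamma>_def Gamma_span .
      have "x = s + (x - s)" by simp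
      then show "x \<in> D" unfolding D_def using s(1) xs by blast
    next
      fix x assume "x \<in> D"
      then obtain s \<gamma> where sg: "x = s + \<gamma>" "s \<in> S" "\<gamma> \<in> \<Gamma>" by (auto simp: D_def)
      have "\<gamma> \<in> {x. expG x = 0}" using sg(3) unfolding \<Gamma>_def Gamma_span .
      then have "expG x = expG s" using sg(1) hom[of s \<gamma>] by simp
      then show "x \<in> expG -` expG ` S" using sg(2) by blast
    qed
    ultimately show ?thesis using dense_image_iff[OF cover, of S] by simp
  qed
  have DV: "\<forall>x\<in>D. g x \<in> C"
    if lin: "linear g" and addC: "\<And>a b. a \<in> C \<Longrightarrow> b \<in> C \<Longrightarrow> a + b \<in> C"
      and VC: "\<And>j. j \<in> {t+1..n+1} \<Longrightarrow> g (v j) \<in> C"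
      and GC: "\<And>\<gamma>. \<gamma> \<in> \<Gamma> \<Longrightarrow> g \<gamma> \<in> C"
    for g :: "'a \<Rightarrow> real" and C
  proof -
    have "S \<subseteq> g -` C" unfolding S_def
      by (rule subsemigroup_gen_subset) (use VC addC linear_add[OF lin] in \<open>auto simp: V_def\<close>)
    then show ?thesis using GC addC linear_add[OF lin] by (auto simp: D_def)
  qed
  have gGamma: "g (\<Sum>i=1..t. of_int (k i) *\<^sub>R v i) = (\<Sum>i=1..t. of_int (k i) * g (v i))"
    if lin: "linear g" for g :: "'a \<Rightarrow> real" and k :: "nat \<Rightarrow> int"
    by (simp add: linear_sum[OF lin] linear_scale[OF lin])
  define B where "B = v ` {1..n}"
  have finB: "finite B" by (simp add: B_def)
  show ?thesis
    unfolding red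
  proof
    assume dens: "closure D = UNIV"
    have spanB: "span B = UNIV"
    proof (rule ccontr)
      assume "span B \<noteq> UNIV"
      then obtain g :: "'a \<Rightarrow> real" and y where g: "linear g" "g y = 1" "\<forall>x\<in>B. g x = 0"
        using functional_vanish_exists by blast
      define \<sigma> where "\<sigma> = (if g (v (n+1)) \<ge> 0 then 1 else -1 :: real)"
      define g' where "g' = (\<lambda>x. \<sigma> * g x)"
      have lin': "linear g'" unfolding g'_def
        by (rule linearI) (simp_all add: linear_add[OF g(1)] linear_scale[OF g(1)] algebra_simps)
      have vB0: "g' (v i) = 0" if "i \<in> {1..n}" for i
        using that g(3) by (auto simp: g'_def B_def)
      have "\<forall>x\<in>D. g' x \<in> {0..}"
      proof (rule DV[OF lin'])
        fix j assume j: "j \<in> {t+1..n+1}"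
        show "g' (v j) \<in> {0..}"
        proof (cases "j = n+1")
          case True then show ?thesis by (auto simp: g'_def \<sigma>_def)
        next
          case False then have "j \<in> {1..n}" using j by auto
          then show ?thesis using vB0 by simp
        qed
      next
        fix \<gamma> assume "\<gamma> \<in> \<Gamma>"
        then obtain k where "\<gamma> = (\<Sum>i=1..t. of_int (k i) *\<^sub>R v i)" by (auto simp: \<Gamma>_def)
        then have "g' \<gamma> = (\<Sum>i=1..t. of_int (k i) * g' (v i))" using gGamma[OF lin'] by simp
        also have "\<dots> = 0" using vB0 t_le by (intro sum.neutral) auto
        finally show "g' \<gamma> \<in> {0..}" by simp
      qed auto
      moreover have "g' y \<noteq> 0" using g(2) by (simp add: g'_def \<sigma>_def)
      ultimately have "closure D \<noteq> UNIV"
        using not_dense_linear[OF lin', of y "{0..}" "-1" D] by auto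
      then show False using dens by simp
    qed
    have cardB: "card B = n"
    proof -
      have "card B \<le> n" unfolding B_def using card_image_le[of "{1..n}" v] by simp
      moreover have "dim (UNIV :: 'a set) \<le> card B" using span_card_ge_dim[of B UNIV] spanB finB by auto
      ultimately show ?thesis using n_def by simp
    qed
    have injv: "inj_on v {1..n}" using cardB eq_card_imp_inj_on[of "{1..n}" v] by (simp add: B_def)
    have indB: "independent B"
      using card_le_dim_spanning[of B UNIV] spanB finB cardB n_def by auto
    obtain \<alpha> where \<alpha>: "v (n+1) = (\<Sum>i=1..n. \<alpha> i *\<^sub>R v i)"
      using span_coeffs[OF injv _ , of "v (n+1)"] spanB by (auto simp: B_def)
    have gvn: "g (v (n+1)) = (\<Sum>i=1..n. \<alpha> i * g (v i))" if lin: "linear g" for g :: "'a \<Rightarrow> real"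
      unfolding \<alpha> by (simp add: linear_sum[OF lin] linear_scale[OF lin])
    have neg: "\<forall>k\<in>{t+1..n}. \<alpha> k < 0"
    proof (rule ballI, rule ccontr)
      fix k assume k: "k \<in> {t+1..n}" and nk: "\<not> \<alpha> k < 0"
      obtain g :: "'a \<Rightarrow> real" where g: "linear g" "\<forall>i\<in>{1..n}. g (v i) = (if i = k then 1 else 0)"
        using coord_functional[OF injv, of "\<lambda>i. if i = k then 1 else 0"] indB by (auto simp: B_def)
      have "g (v (n+1)) = (\<Sum>i=1..n. if i = k then \<alpha> i else 0)"
        unfolding gvn[OF g(1)] by (rule sum.cong) (use g(2) in auto)
      also have "\<dots> = \<alpha> k" using k by (simp add: sum.delta)
      finally have gn: "g (v (n+1)) = \<alpha> k" .
      have "\<forall>x\<in>D. g x \<in> {0..}"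
      proof (rule DV[OF g(1)])
        fix j assume j: "j \<in> {t+1..n+1}"
        show "g (v j) \<in> {0..}"
        proof (cases "j = n+1")
          case True then show ?thesis using gn nk by auto
        next
          case False then have "j \<in> {1..n}" using j by auto
          then show ?thesis using g(2) by simp
        qed
      next
        fix \<gamma> assume "\<gamma> \<in> \<Gamma>"
        then obtain kk where "\<gamma> = (\<Sum>i=1..t. of_int (kk i) *\<^sub>R v i)" by (auto simp: \<Gamma>_def)
        then have "g \<gamma> = (\<Sum>i=1..t. of_int (kk i) * g (v i))" using gGamma[OF g(1)] by simp
        also have "\<dots> = 0" using g(2) t_le k by (intro sum.neutral) auto
        finally show "g \<gamma> \<in> {0..}" by simp
      qed auto
      moreover have "g (v k) \<noteq> 0" using g(2) k by auto
      ultimately have "closure D \<noteq> UNIV"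
        using not_dense_linear[OF g(1), of "v k" "{0..}" "-1" D] by auto
      then show False using dens by simp
    qed
    have qind: "\<forall>q :: nat \<Rightarrow> rat. of_rat (q 0) + (\<Sum>i=1..n. of_rat (q i) * \<alpha> i) = 0
                   \<longrightarrow> (\<forall>i\<in>{0..n}. q i = 0)"
    proof (intro allI impI, rule ccontr)
      fix q :: "nat \<Rightarrow> rat"
      assume hq: "of_rat (q 0) + (\<Sum>i=1..n. of_rat (q i) * \<alpha> i) = 0" and nz: "\<not> (\<forall>i\<in>{0..n}. q i = 0)"
      obtain d :: int where d: "d > 0" "\<forall>i\<le>n. of_int d * (of_rat (q i) :: real) \<in> \<int>"
        using rat_common_denom by blast
      have "\<exists>i\<in>{1..n}. q i \<noteq> 0"
      proof (rule ccontr)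
        assume "\<not> (\<exists>i\<in>{1..n}. q i \<noteq> 0)"
        then have "(\<Sum>i=1..n. of_rat (q i) * \<alpha> i) = 0" by simp
        then have "q 0 = 0" using hq by simp
        then show False using nz \<open>\<not> (\<exists>i\<in>{1..n}. q i \<noteq> 0)\<close>
          by (metis atLeastAtMost_iff le_0_eq not_less_eq_eq Suc_eq_plus1 le_add2 One_nat_def plus_1_eq_Suc)
      qed
      then obtain i0 where i0: "i0 \<in> {1..n}" "q i0 \<noteq> 0" by blast
      obtain g :: "'a \<Rightarrow> real" where g: "linear g" "\<forall>i\<in>{1..n}. g (v i) = of_int d * of_rat (q i)"
        using coord_functional[OF injv, of "\<lambda>i. of_int d * of_rat (q i)"] indB by (auto simp: B_def)
      have "g (v (n+1)) = (\<Sum>i=1..n. of_int d * (of_rat (q i) * \<alpha> i))"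
        unfolding gvn[OF g(1)] by (rule sum.cong) (use g(2) in auto)
      also have "\<dots> = of_int d * (\<Sum>i=1..n. of_rat (q i) * \<alpha> i)" by (simp add: sum_distrib_left)
      also have "\<dots> = - (of_int d * of_rat (q 0))"
      proof -
        have "(\<Sum>i=1..n. of_rat (q i) * \<alpha> i) = - (of_rat (q 0) :: real)" using hq by linarith
        then show ?thesis by simp
      qed
      finally have gn: "g (v (n+1)) \<in> \<int>" using d(2) by simp
      have "\<forall>x\<in>D. g x \<in> \<int>"
      proof (rule DV[OF g(1)])
        fix j assume j: "j \<in> {t+1..n+1}"
        show "g (v j) \<in> \<int>"
        proof (cases "j = n+1")
          case True then show ?thesis using gn by auto
        next
          case False then have "j \<in> {1..n}" using j by auto
          then show ?thesis using g(2) d(2) by simp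
        qed
      next
        fix \<gamma> assume "\<gamma> \<in> \<Gamma>"
        then obtain kk where "\<gamma> = (\<Sum>i=1..t. of_int (kk i) *\<^sub>R v i)" by (auto simp: \<Gamma>_def)
        then have "g \<gamma> = (\<Sum>i=1..t. of_int (kk i) * g (v i))" using gGamma[OF g(1)] by simp
        also have "\<dots> \<in> \<int>"
        proof (intro Ints_sum Ints_mult)
          fix i assume "i \<in> {1..t}"
          then have "i \<in> {1..n}" using t_le by auto
          then show "g (v i) \<in> \<int>" using g(2) d(2) by simp
        qed auto
        finally show "g \<gamma> \<in> \<int>" .
      qed auto
      moreover have "g (v i0) \<noteq> 0" using g(2) i0 d(1) by simp
      ultimately have "closure D \<noteq> UNIV"
        using not_dense_linear[OF g(1), of "v i0" "\<int>" "1/2" D] half_not_Int by auto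
      then show False using dens by simp
    qed
    show "(inj_on v {1..n} \<and> independent (v ` {1..n}) \<and> span (v ` {1..n}) = UNIV) \<and>
            (\<exists>\<alpha> :: nat \<Rightarrow> real.
               v (n+1) = (\<Sum>i=1..n. \<alpha> i *\<^sub>R v i) \<and>
               (\<forall>i\<in>{t+1..n}. \<alpha> i < 0) \<and>
               (\<forall>q :: nat \<Rightarrow> rat. of_rat (q 0) + (\<Sum>i=1..n. of_rat (q i) * \<alpha> i) = 0
                   \<longrightarrow> (\<forall>i\<in>{0..n}. q i = 0)))"
      using injv indB spanB \<alpha> neg qind unfolding B_def by blast
  next
    assume RHS: "(inj_on v {1..n} \<and> independent (v ` {1..n}) \<and> span (v ` {1..n}) = UNIV) \<and>
            (\<exists>\<alpha> :: nat \<Rightarrow> real.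
               v (n+1) = (\<Sum>i=1..n. \<alpha> i *\<^sub>R v i) \<and>
               (\<forall>i\<in>{t+1..n}. \<alpha> i < 0) \<and>
               (\<forall>q :: nat \<Rightarrow> rat. of_rat (q 0) + (\<Sum>i=1..n. of_rat (q i) * \<alpha> i) = 0
                   \<longrightarrow> (\<forall>i\<in>{0..n}. q i = 0)))"
    have injv: "inj_on v {1..n}" using RHS[THEN conjunct1, THEN conjunct1] .
    have spanB: "span (v ` {1..n}) = UNIV" using RHS[THEN conjunct1, THEN conjunct2, THEN conjunct2] .
    obtain \<alpha> :: "nat \<Rightarrow> real" where
      \<alpha>all: "v (n+1) = (\<Sum>i=1..n. \<alpha> i *\<^sub>R v i) \<and>
               (\<forall>i\<in>{t+1..n}. \<alpha> i < 0) \<and>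
               (\<forall>q :: nat \<Rightarrow> rat. of_rat (q 0) + (\<Sum>i=1..n. of_rat (q i) * \<alpha> i) = 0
                   \<longrightarrow> (\<forall>i\<in>{0..n}. q i = 0))"
      using RHS[THEN conjunct2] by (rule exE)
    have \<alpha>: "v (n+1) = (\<Sum>i=1..n. \<alpha> i *\<^sub>R v i)" using \<alpha>all by (rule conjunct1)
    have neg: "\<forall>i\<in>{t+1..n}. \<alpha> i < 0" using \<alpha>all[THEN conjunct2] by (rule conjunct1)
    have qind: "\<forall>q :: nat \<Rightarrow> rat. of_rat (q 0) + (\<Sum>i=1..n. of_rat (q i) * \<alpha> i) = 0
                   \<longrightarrow> (\<forall>i\<in>{0..n}. q i = 0)" using \<alpha>all[THEN conjunct2] by (rule conjunct2)
    have "x \<in> closure D" for x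
      unfolding closure_approachable
    proof (intro allI impI)
      fix \<epsilon> :: real assume eps: "\<epsilon> > 0"
      obtain c where c: "x = (\<Sum>i=1..n. c i *\<^sub>R v i)"
        using span_coeffs[OF injv, of x] spanB by auto
      define M where "M = (\<Sum>i=1..n. norm (v i)) + 1"
      have Mpos: "M > 0" unfolding M_def using sum_nonneg[of "{1..n}" "\<lambda>i. norm (v i)"] by simp
      define \<delta> where "\<delta> = min (\<epsilon> / M) (1/2)"
      have dpos: "\<delta> > 0" using eps Mpos by (simp add: \<delta>_def)
      have dhalf: "\<delta> \<le> 1/2" unfolding \<delta>_def by (rule min.cobounded2)
      have dM: "\<delta> * M \<le> \<epsilon>" using Mpos by (simp add: \<delta>_def min_def field_simps split: if_splits)
      define N0 where "N0 = nat \<lceil>\<Sum>i\<in>{t+1..n}. \<bar>c i\<bar> / (- \<alpha> i)\<rceil> + 1"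
      obtain b :: nat and m :: "nat \<Rightarrow> int" where b: "b \<ge> N0"
        and bm: "\<forall>i\<in>{1..n}. \<bar>real b * \<alpha> i - of_int (m i) - c i\<bar> < \<delta>"
        using kron_nat[OF qind dpos, of N0 c] by blast
      define z where "z i = - m i" for i
      have zi: "\<bar>of_int (z i) + real b * \<alpha> i - c i\<bar> < \<delta>" if "i \<in> {1..n}" for i
      proof -
        have "of_int (z i) + real b * \<alpha> i - c i = real b * \<alpha> i - of_int (m i) - c i"
          by (simp add: z_def)
        then show ?thesis using bm that by simp
      qed
      have bge1: "b \<ge> 1" using b by (simp add: N0_def)
      have zpos: "z i \<ge> 0" if i: "i \<in> {t+1..n}" for i
      proof -
        have ai: "- \<alpha> i > 0" using neg i by simp
        have "\<bar>c i\<bar> / (- \<alpha> i) \<le> (\<Sum>i\<in>{t+1..n}. \<bar>c i\<bar> / (- \<alpha> i))"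
          using i neg by (intro member_le_sum) (auto intro!: divide_nonneg_neg)
        also have "\<dots> \<le> real N0" unfolding N0_def by linarith
        also have "\<dots> \<le> real b" using b by simp
        finally have "\<bar>c i\<bar> / (- \<alpha> i) \<le> real b" .
        then have "\<bar>c i\<bar> \<le> real b * (- \<alpha> i)" using ai by (simp add: field_simps)
        moreover have "i \<in> {1..n}" using i by auto
        then have "\<bar>of_int (z i) + real b * \<alpha> i - c i\<bar> < \<delta>" by (rule zi)
        ultimately have "(of_int (z i) :: real) > - 1/2" using dhalf abs_ge_minus_self[of "c i"] by (simp add: abs_less_iff)
        then show "z i \<ge> 0" by linarith
      qed
      define s where "s = real b *\<^sub>R v (n+1) + (\<Sum>i\<in>{t+1..n}. of_nat (nat (z i)) *\<^sub>R v i)"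
      define \<gamma> where "\<gamma> = (\<Sum>i=1..t. of_int (z i) *\<^sub>R v i)"
      have vS: "v j \<in> S" if "j \<in> {t+1..n+1}" for j
        using that by (auto simp: S_def V_def intro: subsemigroup_gen.gen)
      have "s \<in> S"
      proof -
        obtain b' where b': "b = Suc b'" using bge1 by (cases b) auto
        have "real b *\<^sub>R v (n+1) = v (n+1) + of_nat b' *\<^sub>R v (n+1)"
          using b' by (simp add: algebra_simps)
        moreover have "v (n+1) \<in> S" using vS t_le by simp
        ultimately have "real b *\<^sub>R v (n+1) \<in> S" unfolding S_def using semigroup_mult by metis
        then show ?thesis unfolding s_def S_def
          by (intro semigroup_sum) (use vS in \<open>auto simp: S_def\<close>)
      qed
      moreover have "\<gamma> \<in> \<Gamma>" unfolding \<gamma>_def \<Gamma>_def by blast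
      ultimately have sgD: "s + \<gamma> \<in> D" unfolding D_def by blast
      have s2: "(\<Sum>i\<in>{t+1..n}. of_nat (nat (z i)) *\<^sub>R v i) = (\<Sum>i\<in>{t+1..n}. of_int (z i) *\<^sub>R v i)"
        by (rule sum.cong) (use zpos in auto)
      have split: "(\<Sum>i=1..t. f i) + (\<Sum>i\<in>{t+1..n}. f i) = (\<Sum>i=1..n. f i)" for f :: "nat \<Rightarrow> 'a"
      proof -
        have "{1..n} = {1..t} \<union> {t+1..n}" using t_le by auto
        moreover have "{1..t} \<inter> {t+1..n} = {}" by auto
        ultimately show ?thesis by (simp add: sum.union_disjoint)
      qed
      have "s + \<gamma> = (\<Sum>i=1..n. of_int (z i) *\<^sub>R v i) + (\<Sum>i=1..n. (real b * \<alpha> i) *\<^sub>R v i)"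
        unfolding s_def \<gamma>_def s2 \<alpha> split[symmetric]
        by (simp add: scaleR_sum_right algebra_simps)
      then have "s + \<gamma> - x = (\<Sum>i=1..n. (of_int (z i) + real b * \<alpha> i - c i) *\<^sub>R v i)"
        unfolding c by (simp add: scaleR_add_left scaleR_diff_left sum.distrib sum_subtractf)
      then have "norm (s + \<gamma> - x) \<le> (\<Sum>i=1..n. norm ((of_int (z i) + real b * \<alpha> i - c i) *\<^sub>R v i))"
        by (metis norm_sum)
      also have "\<dots> \<le> (\<Sum>i=1..n. \<delta> * norm (v i))"
      proof (rule sum_mono)
        fix i assume "i \<in> {1..n}"
        then have "\<bar>of_int (z i) + real b * \<alpha> i - c i\<bar> \<le> \<delta>" using zi by fastforce
        then show "norm ((of_int (z i) + real b * \<alpha> i - c i) *\<^sub>R v i) \<le> \<delta> * norm (v i)"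
          by (simp add: mult_right_mono)
      qed
      also have "\<dots> = \<delta> * (M - 1)" by (simp add: M_def sum_distrib_left)
      also have "\<dots> < \<epsilon>" using dM dpos by (simp add: algebra_simps)
      finally have "dist (s + \<gamma>) x < \<epsilon>" by (simp add: dist_norm)
      then show "\<exists>y\<in>D. dist y x < \<epsilon>" using sgD by blast
    qed
    then show "closure D = UNIV" by blast
  qed
qed


end
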